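(* Let $A=(Q,R,F_A)$ be an RNNA, regarded as the coalgebra $c\colon Q\to\mathcal{P}_{\mathsf{ufs}}(1+\mathbb{A}\times Q+[\mathbb{A}]Q)$ with $c(q)=\{*:q\in F_A\}\cup\{(a,q'):q\xrightarrow{a}q'\}\cup\{\langle a\rangle q': q\xrightarrow{\mathord{|}a}q'\}$. Let $\mathsf{tr}_c\colon Q\to\mathcal{P}_{\mathsf{ufs}}(\overline{\mathbb{A}}^*/{=_\alpha})$ be the unique morphism in $\mathrm{Kl}(\mathcal{P}_{\mathsf{ufs}})$ from $(Q,c)$ to the terminal $\overline{F}$-coalgebra $(\overline{\mathbb{A}}^*/{=_\alpha},J\iota^{-1})$, i.e. the unique equivariant map with $J\iota^{-1}\bullet\mathsf{tr}_c=\overline{F}\mathsf{tr}_c\bullet c$. Then for every state $q\in Q$, $\mathsf{tr}_c(q)$ is the bar language accepted by $q$.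
   Context: Fix a countably infinite set $\mathbb{A}$ of names; $\mathsf{Nom}$ is the category of nominal sets and equivariant maps; $\mathrm{supp}(x)$ is the least finite support, $a\#x$ means $a\notin\mathrm{supp}(x)$. $[\mathbb{A}]X=(\mathbb{A}\times X)/\sim$ with $(a,x)\sim(b,y)$ iff $(a\,c)\cdot x=(b\,c)\cdot y$ for fresh $c$; classes $\langle a\rangle x$. $\mathcal{P}_{\mathsf{ufs}}X$ is the set of uniformly finitely supported subsets ($\bigcup_{x\in A}\mathrm{supp}(x)$ finite), a monad with unit $x\mapsto\{x\}$ and multiplication union; $\mathrm{Kl}(\mathcal{P}_{\mathsf{ufs}})$ has equivariant maps $X\to\mathcal{P}_{\mathsf{ufs}}Y$ as morphisms, composed by $g\bullet f(x)=\bigcup_{y\in f(x)}g(y)$, and $Jf(x)=\{f(x)\}$. $FX=1+\mathbb{A}\times X+[\mathbb{A}]X$ with $1=\{*\}$, and $\overline{F}$ its canonical extension: for $f\colon X\to\mathcal{P}_{\mathsf{ufs}}Y$, $\overline{F}f( * )=\{*\}$, $\overline{F}f(a,x)=\{(a,y):y\in f(x)\}$, $\overline{F}f(\langle a\rangle x)=\{\langle a\rangle y: y\in f(x)\}$. Bar strings are words over $\overline{\mathbb{A}}=\mathbb{A}\cup\{\mathord{|}a:a\in\mathbb{A}\}$; $=_\alpha$ is the least equivalence with $x\,\mathord{|}a\,v=_\alpha x\,\mathord{|}b\,w$ whenever $\langle a\rangle v=\langle b\rangle w$ (i.e. $a=b,v=w$, or $b\#v$ and $(a\,b)\cdot v=w$);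 $[w]_\alpha$ its classes. $\iota( * )=[\varepsilon]_\alpha$, $\iota(a,[w]_\alpha)=[aw]_\alpha$, $\iota(\langle a\rangle[w]_\alpha)=[\mathord{|}a\,w]_\alpha$ is the initial $F$-algebra, and $(\overline{\mathbb{A}}^*/{=_\alpha},J\iota^{-1})$ is the terminal $\overline{F}$-coalgebra. An RNNA $(Q,R,F_A)$ consists of an orbit-finite nominal set $Q$, an equivariant relation $R\subseteq Q\times\overline{\mathbb{A}}\times Q$ (write $q\xrightarrow{\sigma}q'$) and an equivariant set $F_A\subseteq Q$ of final states, such that (a) if $q\xrightarrow{\mathord{|}a}q'$ and $\langle a\rangle q'=\langle b\rangle q''$ then $q\xrightarrow{\mathord{|}b}q''$, and (b) for each $q$ the sets $\{(a,q'):q\xrightarrow{a}q'\}$ and $\{\langle a\rangle q':q\xrightarrow{\mathord{|}a}q'\}$ are finite. $q$ accepts $w=\sigma_1\cdots\sigma_n\in\overline{\mathbb{A}}^*$ if there is a run $q\xrightarrow{\sigma_1}q_1\cdots\xrightarrow{\sigma_n}q_n$ with $q_n$ final; the bar language accepted by $q$ is $\{[w]_\alpha: q\text{ accepts }w\}$. *)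

theory Defs
  imports Main
begin

type_synonym name = nat

definition fperm :: "(name \<Rightarrow> name) \<Rightarrow> bool" where
  "fperm p \<longleftrightarrow> bij p \<and> finite {a. p a \<noteq> a}"

definition sw :: "name \<Rightarrow> name \<Rightarrow> name \<Rightarrow> name" where
  "sw a b = id(a := b, b := a)"

definition supports :: "((name \<Rightarrow> name) \<Rightarrow> 'x \<Rightarrow> 'x) \<Rightarrow> name set \<Rightarrow> 'x \<Rightarrow> bool" where
  "supports act A x \<longleftrightarrow> (\<forall>p. fperm p \<and> (\<forall>a\<in>A. p a = a) \<longrightarrow> act p x = x)"

definition supp :: "((name \<Rightarrow> name) \<Rightarrow> 'x \<Rightarrow> 'x) \<Rightarrow> 'x \<Rightarrow> name set" where
  "supp act x = \<Inter> {A. finite A \<and> supports act A x}"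

definition nominal_set :: "((name \<Rightarrow> name) \<Rightarrow> 'x \<Rightarrow> 'x) \<Rightarrow> bool" where
  "nominal_set act \<longleftrightarrow>
     (\<forall>x. act id x = x) \<and>
     (\<forall>p q x. fperm p \<and> fperm q \<longrightarrow> act (p \<circ> q) x = act p (act q x)) \<and>
     (\<forall>x. \<exists>A. finite A \<and> supports act A x)"

definition orbit :: "((name \<Rightarrow> name) \<Rightarrow> 'x \<Rightarrow> 'x) \<Rightarrow> 'x \<Rightarrow> 'x set" where
  "orbit act x = {act p x | p. fperm p}"

definition orbit_finite :: "((name \<Rightarrow> name) \<Rightarrow> 'x \<Rightarrow> 'x) \<Rightarrow> bool" where
  "orbit_finite act \<longleftrightarrow> finite (range (orbit act))"

definition abs_eq :: "((name \<Rightarrow> name) \<Rightarrow> 'x \<Rightarrow> 'x) \<Rightarrow> name \<Rightarrow> 'x \<Rightarrow> name \<Rightarrow> 'x \<Rightarrow> bool" where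
  "abs_eq act a x b y \<longleftrightarrow>
     (\<exists>c. c \<noteq> a \<and> c \<noteq> b \<and> c \<notin> supp act x \<and> c \<notin> supp act y \<and>
          act (sw a c) x = act (sw b c) y)"

definition absclass :: "((name \<Rightarrow> name) \<Rightarrow> 'x \<Rightarrow> 'x) \<Rightarrow> name \<Rightarrow> 'x \<Rightarrow> (name \<times> 'x) set" where
  "absclass act a x = {(b, y). abs_eq act a x b y}"

datatype bar = Plain name | Bind name

fun bact :: "(name \<Rightarrow> name) \<Rightarrow> bar \<Rightarrow> bar" where
  "bact p (Plain a) = Plain (p a)"
| "bact p (Bind a) = Bind (p a)"

definition blact :: "(name \<Rightarrow> name) \<Rightarrow> bar list \<Rightarrow> bar list" where
  "blact p w = map (bact p) w"

inductive alpha :: "bar list \<Rightarrow> bar list \<Rightarrow> bool" where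
  alpha_refl: "alpha w w"
| alpha_sym: "alpha v w \<Longrightarrow> alpha w v"
| alpha_trans: "alpha u v \<Longrightarrow> alpha v w \<Longrightarrow> alpha u w"
| alpha_step: "abs_eq blact a v b w \<Longrightarrow> alpha (x @ Bind a # v) (x @ Bind b # w)"

definition acls :: "bar list \<Rightarrow> bar list set" where
  "acls w = {v. alpha w v}"

definition AC :: "bar list set set" where
  "AC = range acls"

definition clact :: "(name \<Rightarrow> name) \<Rightarrow> bar list set \<Rightarrow> bar list set" where
  "clact p L = blact p ` L"

section \<open>The functor F X = 1 + A x X + [A]X and its Kleisli extension\<close>

datatype 'x Fo = FStar | FLit name 'x | FAbs "(name \<times> 'x) set"

definition kcomp :: "('y \<Rightarrow> 'z set) \<Rightarrow> ('x \<Rightarrow> 'y set) \<Rightarrow> 'x \<Rightarrow> 'z set" where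
  "kcomp g f x = \<Union> (g ` f x)"

text \<open>canonical extension \<open>\<overline>F\<close> of F to Kl(P_ufs); on abstractions via any representative\<close>
fun Fbar :: "((name \<Rightarrow> name) \<Rightarrow> 'y \<Rightarrow> 'y) \<Rightarrow> ('x \<Rightarrow> 'y set) \<Rightarrow> 'x Fo \<Rightarrow> 'y Fo set" where
  "Fbar actY f FStar = {FStar}"
| "Fbar actY f (FLit a x) = {FLit a y | y. y \<in> f x}"
| "Fbar actY f (FAbs C) = {FAbs (absclass actY a y) | a x y. (a, x) \<in> C \<and> y \<in> f x}"

text \<open>The carrier F(A-bar-star / =alpha) of well-formed elements\<close>
definition FC :: "bar list set Fo set" where
  "FC = {FStar} \<union> {FLit a L | a L. L \<in> AC} \<union> {FAbs (absclass clact a L) | a L. L \<in> AC}"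

fun iota :: "bar list set Fo \<Rightarrow> bar list set" where
  "iota FStar = acls []"
| "iota (FLit a L) = {v. \<exists>w\<in>L. alpha (Plain a # w) v}"
| "iota (FAbs C) = {v. \<exists>(b, L)\<in>C. \<exists>w\<in>L. alpha (Bind b # w) v}"

definition rnna :: "((name \<Rightarrow> name) \<Rightarrow> 'q \<Rightarrow> 'q) \<Rightarrow> ('q \<times> bar \<times> 'q) set \<Rightarrow> 'q set \<Rightarrow> bool" where
  "rnna act R Fin \<longleftrightarrow>
     nominal_set act \<and> orbit_finite act \<and>
     (\<forall>p q s q'. fperm p \<and> (q, s, q') \<in> R \<longrightarrow> (act p q, bact p s, act p q') \<in> R) \<and>
     (\<forall>p q. fperm p \<and> q \<in> Fin \<longrightarrow> act p q \<in> Fin) \<and>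
     (\<forall>q a q' b q''. (q, Bind a, q') \<in> R \<and> abs_eq act a q' b q''
                      \<longrightarrow> (q, Bind b, q'') \<in> R) \<and>
     (\<forall>q. finite {(a, q'). (q, Plain a, q') \<in> R}) \<and>
     (\<forall>q. finite {absclass act a q' | a q'. (q, Bind a, q') \<in> R})"

definition coal :: "((name \<Rightarrow> name) \<Rightarrow> 'q \<Rightarrow> 'q) \<Rightarrow> ('q \<times> bar \<times> 'q) set \<Rightarrow> 'q set \<Rightarrow> 'q \<Rightarrow> 'q Fo set" where
  "coal act R Fin q =
     {FStar | _::unit. q \<in> Fin} \<union> {FLit a q' | a q'. (q, Plain a, q') \<in> R}
     \<union> {FAbs (absclass act a q') | a q'. (q, Bind a, q') \<in> R}"

fun accepts :: "('q \<times> bar \<times> 'q) set \<Rightarrow> 'q set \<Rightarrow> 'q \<Rightarrow> bar list \<Rightarrow> bool" where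
  "accepts R Fin q [] \<longleftrightarrow> q \<in> Fin"
| "accepts R Fin q (s # w) \<longleftrightarrow> (\<exists>q'. (q, s, q') \<in> R \<and> accepts R Fin q' w)"

definition bar_lang :: "('q \<times> bar \<times> 'q) set \<Rightarrow> 'q set \<Rightarrow> 'q \<Rightarrow> bar list set set" where
  "bar_lang R Fin q = {acls w | w. accepts R Fin q w}"

text \<open>Kleisli morphisms from (Q,c) to the terminal coalgebra (A-bar-star/=alpha, J iota^-1):
 equivariant maps into uniformly finitely supported sets of alpha-classes
 satisfying  J iota^-1 \<bullet> tr = Fbar tr \<bullet> c.\<close>
definition trace_morph :: "((name \<Rightarrow> name) \<Rightarrow> 'q \<Rightarrow> 'q) \<Rightarrow> ('q \<times> bar \<times> 'q) set \<Rightarrow> 'q set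
                           \<Rightarrow> ('q \<Rightarrow> bar list set set) \<Rightarrow> bool" where
  "trace_morph act R Fin tr \<longleftrightarrow>
     (\<forall>q. tr q \<subseteq> AC) \<and>
     (\<forall>q. finite (\<Union>L\<in>tr q. supp clact L)) \<and>
     (\<forall>p q. fperm p \<longrightarrow> tr (act p q) = clact p ` tr q) \<and>
     kcomp (\<lambda>L. {inv_into FC iota L}) tr = kcomp (Fbar clact tr) (coal act R Fin)"

end

theory Submission
  imports Defs
begin


lemma sw_apply: "sw a b x = (if x = a then b else if x = b then a else x)"
  by (simp add: sw_def)

lemma sw_sw[simp]: "sw a b (sw a b x) = x"
  by (simp add: sw_apply)

lemma sw_same[simp]: "sw a a = id"
  by (rule ext) (simp add: sw_apply)

lemma sw_bij: "bij (sw a b)"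
  by (metis bijI' sw_sw)

lemma sw_inj: "inj (sw a b)"
  using bij_is_inj sw_bij by blast

lemma fperm_sw: "fperm (sw a b)"
proof -
  have "{x. sw a b x \<noteq> x} \<subseteq> {a, b}" by (auto simp: sw_apply split: if_splits)
  then show ?thesis unfolding fperm_def using sw_bij finite_subset by blast
qed

lemma fperm_inv: "fperm p \<Longrightarrow> fperm (inv p)"
proof -
  assume "fperm p"
  then have b: "bij p" and f: "finite {x. p x \<noteq> x}" by (auto simp: fperm_def)
  have "{x. inv p x \<noteq> x} \<subseteq> p ` {x. p x \<noteq> x}"
  proof
    fix x assume "x \<in> {x. inv p x \<noteq> x}"
    then have "inv p x \<noteq> x" by simp
    moreover have "p (inv p x) = x" using b by (simp add: bij_is_surj surj_f_inv_f)
    ultimately show "x \<in> p ` {x. p x \<noteq> x}" by (metis (mono_tags) image_eqI mem_Collect_eq)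
  qed
  then show ?thesis using f b unfolding fperm_def by (meson bij_imp_bij_inv finite_imageI finite_subset)
qed

lemma sw_fix: "x \<noteq> a \<Longrightarrow> x \<noteq> b \<Longrightarrow> sw a b x = x"
  by (simp add: sw_apply)

lemma sw_eqvt: "inj p \<Longrightarrow> sw (p a) (p c) (p x) = p (sw a c x)"
  by (auto simp: sw_apply inj_eq)

lemma fresh_name: "finite (X::name set) \<Longrightarrow> \<exists>c. c \<notin> X"
  by (simp add: ex_new_if_finite)

section \<open>words\<close>

fun nm :: "bar \<Rightarrow> name" where
  "nm (Plain a) = a" | "nm (Bind a) = a"

definition names :: "bar list \<Rightarrow> name set" where
  "names w = nm ` set w"

fun fnw :: "bar list \<Rightarrow> name set" where
  "fnw [] = {}"
| "fnw (Plain a # w) = insert a (fnw w)"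
| "fnw (Bind a # w) = fnw w - {a}"

lemma names_simps[simp]: "names [] = {}" "names (s # w) = insert (nm s) (names w)"
  "names (x @ y) = names x \<union> names y"
  by (auto simp: names_def)

lemma finite_names[simp]: "finite (names w)"
  by (simp add: names_def)

lemma fnw_names: "fnw w \<subseteq> names w"
  by (induction w rule: fnw.induct) auto

lemma finite_fnw[simp]: "finite (fnw w)"
  using fnw_names finite_names finite_subset by blast

lemma blact_simps[simp]: "blact p [] = []" "blact p (s # w) = bact p s # blact p w"
  "blact p (x @ y) = blact p x @ blact p y"
  by (auto simp: blact_def)

lemma bact_nm[simp]: "nm (bact p s) = p (nm s)"
  by (cases s) auto

lemma bact_comp[simp]: "bact p (bact q s) = bact (p \<circ> q) s"
  by (cases s) auto

lemma blact_comp[simp]: "blact p (blact q w) = blact (p \<circ> q) w"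
  by (induction w) (simp_all only: blact_simps bact_comp)

lemma bact_id[simp]: "bact id s = s" by (cases s) auto
lemma blact_id[simp]: "blact id w = w" by (induction w) (simp_all only: blact_simps bact_id)

lemma blact_cong: "(\<And>x. x \<in> names w \<Longrightarrow> p x = q x) \<Longrightarrow> blact p w = blact q w"
proof (induction w)
  case (Cons s w) then show ?case by (cases s) auto
qed simp

lemma blact_fix: "(\<And>x. x \<in> names w \<Longrightarrow> p x = x) \<Longrightarrow> blact p w = w"
  using blact_cong[of w p id] by simp

lemma names_blact[simp]: "names (blact p w) = p ` names w"
  by (induction w) auto

lemma fnw_blact: "inj p \<Longrightarrow> fnw (blact p w) = p ` fnw w"
proof (induction w rule: fnw.induct)
  case (3 a w) then show ?case by (auto simp: inj_eq)
qed auto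

lemma length_blact[simp]: "length (blact p w) = length w"
  by (simp add: blact_def)

lemma sw_sw_blact[simp]: "blact (sw a b) (blact (sw a b) w) = w"
proof -
  have "sw a b \<circ> sw a b = id" by (rule ext) simp
  then show ?thesis by simp
qed

lemma supports_blact: "supports blact (names w) w"
  unfolding supports_def using blact_fix by blast

lemma supp_blact: "supp blact w = names w"
proof
  show "supp blact w \<subseteq> names w"
    unfolding supp_def using supports_blact finite_names by blast
next
  show "names w \<subseteq> supp blact w"
  proof
    fix x assume x: "x \<in> names w"
    show "x \<in> supp blact w" unfolding supp_def
    proof (rule InterI)
      fix A assume "A \<in> {A. finite A \<and> supports blact A w}"
      then have A: "finite A" "supports blact A w" by auto
      show "x \<in> A"
      proof (rule ccontr)
        assume xA: "x \<notin> A"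
        obtain b where b: "b \<notin> A \<union> names w" using fresh_name[of "A \<union> names w"] A by auto
        have "\<forall>a\<in>A. sw x b a = a" using xA b by (auto simp: sw_apply)
        then have "blact (sw x b) w = w" using A(2) fperm_sw unfolding supports_def by blast
        then have "names w = sw x b ` names w" by (metis names_blact)
        then have "b \<in> names w" using x by (metis image_eqI sw_apply)
        then show False using b by blast
      qed
    qed
  qed
qed

lemma abs_eq_blact: "abs_eq blact a v b w \<longleftrightarrow>
  (\<exists>c. c \<noteq> a \<and> c \<noteq> b \<and> c \<notin> names v \<and> c \<notin> names w \<and> blact (sw a c) v = blact (sw b c) w)"
  by (simp add: abs_eq_def supp_blact)




lemma alpha_length: "alpha u v \<Longrightarrow> length u = length v"
  by (induction rule: alpha.induct) (auto simp: abs_eq_blact, metis length_blact)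

lemma alpha_cons: "alpha u v \<Longrightarrow> alpha (s # u) (s # v)"
proof (induction rule: alpha.induct)
  case (alpha_step a v b w x)
  then show ?case using alpha.alpha_step[of a v b w "s # x"] by simp
qed (auto intro: alpha.intros)

lemma alpha_eqvt: assumes ip: "inj p" shows "alpha u v \<Longrightarrow> alpha (blact p u) (blact p v)"
proof (induction rule: alpha.induct)
  case (alpha_step a v b w x)
  then obtain c where c: "c \<noteq> a" "c \<noteq> b" "c \<notin> names v" "c \<notin> names w"
    "blact (sw a c) v = blact (sw b c) w" by (auto simp: abs_eq_blact)
  have "blact (sw (p a) (p c)) (blact p v) = blact p (blact (sw a c) v)"
    using ip by (auto intro!: blact_cong simp: sw_eqvt)
  moreover have "blact (sw (p b) (p c)) (blact p w) = blact p (blact (sw b c) w)"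
    using ip by (auto intro!: blact_cong simp: sw_eqvt)
  ultimately have "abs_eq blact (p a) (blact p v) (p b) (blact p w)"
    unfolding abs_eq_blact using c ip
    by (intro exI[of _ "p c"]) (auto simp: inj_eq)
  then show ?case using alpha.alpha_step by simp
qed (auto intro: alpha.intros)

lemma fnw_append_cong: "fnw y = fnw y' \<Longrightarrow> fnw (x @ y) = fnw (x @ y')"
proof (induction x)
  case (Cons s x) then show ?case by (cases s) auto
qed simp

lemma img_sw_minus: "c \<notin> X \<Longrightarrow> sw a c ` X - {c} = X - {a}"
  by (auto simp: sw_apply image_iff split: if_splits)

lemma fnw_alpha: "alpha u v \<Longrightarrow> fnw u = fnw v"
proof (induction rule: alpha.induct)
  case (alpha_step a v b w x)
  then obtain c where c: "c \<noteq> a" "c \<noteq> b" "c \<notin> names v" "c \<notin> names w"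
    "blact (sw a c) v = blact (sw b c) w" by (auto simp: abs_eq_blact)
  have "sw a c ` fnw v = sw b c ` fnw w" using c(5) fnw_blact sw_inj by metis
  moreover have "c \<notin> fnw v" "c \<notin> fnw w" using c fnw_names by auto
  ultimately have "fnw v - {a} = fnw w - {b}" using img_sw_minus by metis
  then show ?case using fnw_append_cong[of "Bind a # v" "Bind b # w" x] by simp
qed auto

lemma ren_step: "d' \<notin> names u \<Longrightarrow> d' \<noteq> d \<Longrightarrow> alpha (Bind d # u) (Bind d' # blact (sw d d') u)"
proof -
  assume h: "d' \<notin> names u" "d' \<noteq> d"
  obtain e where e: "e \<notin> names u \<union> {d, d'}" using fresh_name[of "names u \<union> {d, d'}"] by auto
  have "blact (sw d e) u = blact (sw d' e) (blact (sw d d') u)"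
    using h e by (auto intro!: blact_cong simp: sw_apply)
  moreover have "e \<notin> names (blact (sw d d') u)" using e h by (auto simp: sw_apply)
  ultimately have "abs_eq blact d u d' (blact (sw d d') u)"
    unfolding abs_eq_blact using e by (intro exI[of _ e]) auto
  then show ?thesis using alpha_step[of d u d' _ "[]"] by simp
qed

lemma rename_away: "c \<notin> fnw v \<Longrightarrow> \<exists>v'. alpha v v' \<and> c \<notin> names v'"
proof (induction "length v" arbitrary: v rule: less_induct)
  case less
  show ?case
  proof (cases v)
    case Nil then show ?thesis by (intro exI[of _ "[]"]) (simp add: alpha_refl)
  next
    case (Cons s u)
    note vc = Cons
    show ?thesis
    proof (cases s)
      case (Plain d)
      then have "c \<notin> fnw u" "c \<noteq> d" using less.prems vc by auto
      then obtain u' where "alpha u u'" "c \<notin> names u'" using less.hyps vc by auto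
      then show ?thesis using vc Plain \<open>c \<noteq> d\<close> by (intro exI[of _ "Plain d # u'"]) (auto intro: alpha_cons)
    next
      case (Bind d)
      show ?thesis
      proof (cases "c = d")
        case True
        obtain d' where d': "d' \<notin> names u \<union> {c, d}" using fresh_name[of "names u \<union> {c, d}"] by auto
        have a1: "alpha (Bind d # u) (Bind d' # blact (sw d d') u)" using ren_step d' by auto
        have "fnw (blact (sw d d') u) = sw d d' ` fnw u" using fnw_blact sw_inj by metis
        then have "c \<notin> fnw (blact (sw d d') u)" using d' True fnw_names by (auto simp: sw_apply)
        moreover have "length (blact (sw d d') u) < length v" using vc by simp
        ultimately obtain u' where "alpha (blact (sw d d') u) u'" "c \<notin> names u'" using less.hyps by blast
        then show ?thesis using a1 vc Bind d'
          by (intro exI[of _ "Bind d' # u'"]) (auto intro: alpha_cons alpha_trans)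
      next
        case False
        then have "c \<notin> fnw u" using less.prems vc Bind by auto
        then obtain u' where "alpha u u'" "c \<notin> names u'" using less.hyps vc by auto
        then show ?thesis using vc Bind False by (intro exI[of _ "Bind d # u'"]) (auto intro: alpha_cons)
      qed
    qed
  qed
qed

lemma rename_bind: "c \<notin> fnw v \<Longrightarrow> alpha (Bind a # v) (Bind c # blact (sw a c) v)"
proof (cases "c = a")
  case True then show ?thesis by (simp add: alpha_refl)
next
  case False
  assume "c \<notin> fnw v"
  then obtain v' where v': "alpha v v'" "c \<notin> names v'" using rename_away by blast
  have "alpha (Bind a # v) (Bind a # v')" using v' alpha_cons by blast
  moreover have "alpha (Bind a # v') (Bind c # blact (sw a c) v')" using ren_step v' False by auto
  moreover have "alpha (Bind c # blact (sw a c) v') (Bind c # blact (sw a c) v)"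
    using alpha_eqvt[OF sw_inj v'(1)] alpha_sym alpha_cons by blast
  ultimately show ?thesis using alpha_trans by blast
qed

lemma alpha_fix: "fperm p \<Longrightarrow> (\<And>x. x \<in> fnw w \<Longrightarrow> p x = x) \<Longrightarrow> alpha w (blact p w)"
proof (induction "length w" arbitrary: w rule: less_induct)
  case less
  have ip: "inj p" using less.prems(1) by (simp add: fperm_def bij_is_inj)
  show ?case
  proof (cases w)
    case Nil then show ?thesis using alpha_refl by simp
  next
    case (Cons s v)
    show ?thesis
    proof (cases s)
      case (Plain a)
      then have "p a = a" "\<And>x. x \<in> fnw v \<Longrightarrow> p x = x" using less.prems Cons by auto
      then have "alpha v (blact p v)" using less Cons by auto
      then show ?thesis using Cons Plain \<open>p a = a\<close> alpha_cons by fastforce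
    next
      case (Bind a)
      have fin: "finite {x. p x \<noteq> x}" using less.prems(1) by (simp add: fperm_def)
      obtain c where c: "c \<notin> names v \<union> {a, p a} \<union> {x. p x \<noteq> x}"
        using fresh_name[of "names v \<union> {a, p a} \<union> {x. p x \<noteq> x}"] fin by auto
      have cv: "c \<notin> fnw v" using c fnw_names by auto
      have pc: "p c = c" using c by auto
      have a1: "alpha (Bind a # v) (Bind c # blact (sw a c) v)" using rename_bind cv by blast
      have "fnw (blact (sw a c) v) = sw a c ` fnw v" using fnw_blact sw_inj by metis
      moreover have "\<And>x. x \<in> fnw v \<Longrightarrow> x \<noteq> a \<Longrightarrow> p x = x" using less.prems(2) Cons Bind by auto
      ultimately have "\<And>x. x \<in> fnw (blact (sw a c) v) \<Longrightarrow> p x = x" using cv pc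
        by (auto simp: sw_apply)
      moreover have "length (blact (sw a c) v) < length w" using Cons by simp
      ultimately have "alpha (blact (sw a c) v) (blact p (blact (sw a c) v))"
        using less.hyps less.prems(1) by blast
      then have a2: "alpha (Bind c # blact (sw a c) v) (blact p (Bind c # blact (sw a c) v))"
        using pc alpha_cons by fastforce
      have a3: "alpha (blact p (Bind a # v)) (blact p (Bind c # blact (sw a c) v))"
        using alpha_eqvt[OF ip a1] .
      show ?thesis using a1 a2 a3 Cons Bind alpha_trans alpha_sym by metis
    qed
  qed
qed




definition Pall :: "name \<Rightarrow> bar list \<Rightarrow> name \<Rightarrow> bar list \<Rightarrow> bool" where
  "Pall a v b w \<longleftrightarrow> (\<forall>c. c \<notin> fnw v \<longrightarrow> c \<notin> fnw w \<longrightarrow> c \<noteq> a \<longrightarrow> c \<noteq> b \<longrightarrow>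
     alpha (blact (sw a c) v) (blact (sw b c) w))"

lemma sw_comm: "a \<noteq> c \<Longrightarrow> a \<noteq> d \<Longrightarrow> sw c d \<circ> sw a d = sw a c \<circ> sw c d"
  by (rule ext) (auto simp: sw_apply)

lemma swap_T: "c \<notin> fnw v \<Longrightarrow> d \<notin> fnw v \<Longrightarrow> c \<noteq> a \<Longrightarrow> d \<noteq> a \<Longrightarrow>
  alpha (blact (sw a c) v) (blact (sw c d) (blact (sw a d) v))"
proof -
  assume h: "c \<notin> fnw v" "d \<notin> fnw v" "c \<noteq> a" "d \<noteq> a"
  have "alpha v (blact (sw c d) v)" using h by (intro alpha_fix fperm_sw) (auto simp: sw_apply)
  then have "alpha (blact (sw a c) v) (blact (sw a c) (blact (sw c d) v))"
    using alpha_eqvt sw_inj by blast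
  moreover have "blact (sw a c) (blact (sw c d) v) = blact (sw c d) (blact (sw a d) v)"
    using sw_comm[of a c d] h by simp
  ultimately show ?thesis by simp
qed

lemma one_all: "d \<notin> fnw v \<Longrightarrow> d \<notin> fnw w \<Longrightarrow> d \<noteq> a \<Longrightarrow> d \<noteq> b \<Longrightarrow>
   alpha (blact (sw a d) v) (blact (sw b d) w) \<Longrightarrow> Pall a v b w"
  unfolding Pall_def
proof (intro allI impI)
  fix c assume h: "d \<notin> fnw v" "d \<notin> fnw w" "d \<noteq> a" "d \<noteq> b"
    "alpha (blact (sw a d) v) (blact (sw b d) w)"
    and c: "c \<notin> fnw v" "c \<notin> fnw w" "c \<noteq> a" "c \<noteq> b"
  have 1: "alpha (blact (sw a c) v) (blact (sw c d) (blact (sw a d) v))" using swap_T h c by blast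
  have 2: "alpha (blact (sw b c) w) (blact (sw c d) (blact (sw b d) w))" using swap_T h c by blast
  have 3: "alpha (blact (sw c d) (blact (sw a d) v)) (blact (sw c d) (blact (sw b d) w))"
    using alpha_eqvt[OF sw_inj h(5)] .
  show "alpha (blact (sw a c) v) (blact (sw b c) w)"
    using 1 2 3 alpha_trans alpha_sym by meson
qed

lemma Pall_sym: "Pall a v b w \<Longrightarrow> Pall b w a v"
  unfolding Pall_def using alpha_sym by blast

lemma Pall_trans: "Pall a v b w \<Longrightarrow> Pall b w d u \<Longrightarrow> Pall a v d u"
proof -
  assume h: "Pall a v b w" "Pall b w d u"
  obtain c where c: "c \<notin> fnw v \<union> fnw w \<union> fnw u \<union> {a, b, d}"
    using fresh_name[of "fnw v \<union> fnw w \<union> fnw u \<union> {a, b, d}"] by auto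
  have "alpha (blact (sw a c) v) (blact (sw b c) w)" "alpha (blact (sw b c) w) (blact (sw d c) u)"
    using h c unfolding Pall_def by auto
  then have "alpha (blact (sw a c) v) (blact (sw d c) u)" using alpha_trans by blast
  then show ?thesis using one_all c by blast
qed

lemma Pall_cong: "alpha u u' \<Longrightarrow> Pall e u e u'"
  unfolding Pall_def using alpha_eqvt sw_inj by blast

definition Hrel :: "bar list \<Rightarrow> bar list \<Rightarrow> bool" where
  "Hrel u v \<longleftrightarrow> (u = [] \<and> v = []) \<or> (\<exists>a w w'. u = Plain a # w \<and> v = Plain a # w' \<and> alpha w w')
     \<or> (\<exists>a b w w'. u = Bind a # w \<and> v = Bind b # w' \<and> Pall a w b w')"

lemma Hrel_NilI: "Hrel [] []" by (simp add: Hrel_def)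
lemma Hrel_PlainI: "alpha w w' \<Longrightarrow> Hrel (Plain a # w) (Plain a # w')" by (simp add: Hrel_def)
lemma Hrel_BindI: "Pall a w b w' \<Longrightarrow> Hrel (Bind a # w) (Bind b # w')" by (simp add: Hrel_def)

lemma Hrel_cases: assumes "Hrel u v"
  obtains "u = []" "v = []"
  | a w w' where "u = Plain a # w" "v = Plain a # w'" "alpha w w'"
  | a b w w' where "u = Bind a # w" "v = Bind b # w'" "Pall a w b w'"
  using assms unfolding Hrel_def by blast

lemma Hrel_refl: "Hrel w w"
proof (cases w rule: fnw.cases)
  case 1 then show ?thesis using Hrel_NilI by simp
next
  case (2 a v) then show ?thesis using Hrel_PlainI alpha.alpha_refl by simp
next
  case (3 a v)
  have "Pall a v a v" using Pall_cong alpha.alpha_refl by blast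
  then show ?thesis using 3 Hrel_BindI by simp
qed

lemma Hrel_sym: "Hrel u v \<Longrightarrow> Hrel v u"
proof (erule Hrel_cases)
  show "u = [] \<Longrightarrow> v = [] \<Longrightarrow> Hrel v u" using Hrel_NilI by simp
next
  fix a w w' assume "u = Plain a # w" "v = Plain a # w'" "alpha w w'"
  then show "Hrel v u" using Hrel_PlainI alpha.alpha_sym by simp
next
  fix a b w w' assume "u = Bind a # w" "v = Bind b # w'" "Pall a w b w'"
  then show "Hrel v u" using Hrel_BindI Pall_sym by simp
qed

lemma Hrel_trans: "Hrel u v \<Longrightarrow> Hrel v w \<Longrightarrow> Hrel u w"
proof (erule Hrel_cases)
  assume "Hrel v w" "u = []" "v = []"
  then show "Hrel u w" by (auto elim: Hrel_cases)
next
  fix a x x' assume h: "Hrel v w" "u = Plain a # x" "v = Plain a # x'" "alpha x x'"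
  from h(1) show "Hrel u w"
  proof (cases rule: Hrel_cases)
    case (2 a' y y')
    then show ?thesis using h Hrel_PlainI alpha.alpha_trans by simp
  qed (use h in simp_all)
next
  fix a b x x' assume h: "Hrel v w" "u = Bind a # x" "v = Bind b # x'" "Pall a x b x'"
  from h(1) show "Hrel u w"
  proof (cases rule: Hrel_cases)
    case (3 b' d y y')
    then show ?thesis using h Hrel_BindI Pall_trans by simp
  qed (use h in simp_all)
qed

lemma Hrel_alpha: "alpha u v \<Longrightarrow> Hrel u v"
proof (induction rule: alpha.induct)
  case (alpha_refl w)
  then show ?case using Hrel_refl by blast
next
  case (alpha_sym v w)
  then show ?case using Hrel_sym by blast
next
  case (alpha_trans u v w)
  then show ?case using Hrel_trans by blast
next
  case (alpha_step a v b w x)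
  show ?case
  proof (cases x)
    case Nil
    obtain c where c: "c \<noteq> a" "c \<noteq> b" "c \<notin> names v" "c \<notin> names w"
      "blact (sw a c) v = blact (sw b c) w" using alpha_step by (auto simp: abs_eq_blact)
    have "Pall a v b w" using c fnw_names by (intro one_all[of c]) (auto intro: alpha.alpha_refl)
    then show ?thesis using Nil unfolding Hrel_def by auto
  next
    case (Cons s x')
    have al: "alpha (x' @ Bind a # v) (x' @ Bind b # w)" using alpha.alpha_step alpha_step by blast
    show ?thesis
    proof (cases s)
      case (Plain e) then show ?thesis using Cons al unfolding Hrel_def by auto
    next
      case (Bind e) then show ?thesis using Cons al Pall_cong unfolding Hrel_def by auto
    qed
  qed
qed

lemma alpha_Nil: "alpha [] v \<Longrightarrow> v = []"
  using Hrel_alpha unfolding Hrel_def by blast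

lemma alpha_Plain: "alpha (Plain a # w) v \<Longrightarrow> \<exists>w'. v = Plain a # w' \<and> alpha w w'"
  using Hrel_alpha unfolding Hrel_def by blast

lemma alpha_Bind: "alpha (Bind a # w) v \<Longrightarrow> \<exists>b w'. v = Bind b # w' \<and> Pall a w b w'"
  using Hrel_alpha unfolding Hrel_def by blast




section \<open>classes\<close>

lemma acls_mem[simp]: "v \<in> acls u \<longleftrightarrow> alpha u v"
  by (simp add: acls_def)

lemma acls_eq_iff: "acls u = acls v \<longleftrightarrow> alpha u v"
proof
  assume "acls u = acls v"
  then show "alpha u v" using alpha_refl acls_mem by blast
next
  assume "alpha u v"
  then show "acls u = acls v" unfolding acls_def using alpha_trans alpha_sym by blast
qed

lemma clact_acls: "bij p \<Longrightarrow> clact p (acls w) = acls (blact p w)"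
proof -
  assume b: "bij p"
  have ip: "inj p" and ii: "inj (inv p)" using b bij_is_inj bij_imp_bij_inv by blast+
  have pi: "p \<circ> inv p = id" using b bij_is_surj surj_iff by blast
  have ip2: "inv p \<circ> p = id" using ip by (simp add: inj_iff)
  show ?thesis unfolding clact_def
  proof
    show "blact p ` acls w \<subseteq> acls (blact p w)" using alpha_eqvt[OF ip] by auto
  next
    show "acls (blact p w) \<subseteq> blact p ` acls w"
    proof
      fix v assume "v \<in> acls (blact p w)"
      then have "alpha (blact p w) v" by simp
      then have "alpha (blact (inv p) (blact p w)) (blact (inv p) v)" using alpha_eqvt[OF ii] by blast
      then have "alpha w (blact (inv p) v)" using ip2 by simp
      moreover have "blact p (blact (inv p) v) = v" using pi by simp
      ultimately show "v \<in> blact p ` acls w" by (metis acls_mem image_eqI)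
    qed
  qed
qed

lemma clact_sw: "clact (sw a b) (acls w) = acls (blact (sw a b) w)"
  using clact_acls sw_bij by blast

lemma supp_acls: "supp clact (acls w) = fnw w"
proof
  have "supports clact (fnw w) (acls w)" unfolding supports_def
  proof (intro allI impI)
    fix p assume p: "fperm p \<and> (\<forall>a\<in>fnw w. p a = a)"
    then have "alpha w (blact p w)" using alpha_fix by blast
    then have "acls (blact p w) = acls w" using acls_eq_iff alpha_sym by blast
    moreover have "clact p (acls w) = acls (blact p w)" using clact_acls p unfolding fperm_def by blast
    ultimately show "clact p (acls w) = acls w" by simp
  qed
  then show "supp clact (acls w) \<subseteq> fnw w" unfolding supp_def by (intro Inter_lower) simp
next
  show "fnw w \<subseteq> supp clact (acls w)"
  proof
    fix x assume x: "x \<in> fnw w"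
    show "x \<in> supp clact (acls w)" unfolding supp_def
    proof (rule InterI)
      fix A assume "A \<in> {A. finite A \<and> supports clact A (acls w)}"
      then have A: "finite A" "supports clact A (acls w)" by auto
      show "x \<in> A"
      proof (rule ccontr)
        assume xA: "x \<notin> A"
        obtain b where b: "b \<notin> A \<union> names w" using fresh_name[of "A \<union> names w"] A by auto
        have "\<forall>a\<in>A. sw x b a = a" using xA b by (auto simp: sw_apply)
        then have "clact (sw x b) (acls w) = acls w" using A(2) fperm_sw unfolding supports_def by blast
        then have "acls (blact (sw x b) w) = acls w" using clact_sw by simp
        then have "alpha w (blact (sw x b) w)" using acls_eq_iff alpha_sym by blast
        then have "fnw w = fnw (blact (sw x b) w)" using fnw_alpha by blast
        also have "\<dots> = sw x b ` fnw w" using fnw_blact sw_inj by blast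
        finally have "fnw w = sw x b ` fnw w" .
        then have "b \<in> fnw w" using x by (metis image_eqI sw_apply)
        then show False using b fnw_names by blast
      qed
    qed
  qed
qed

lemma abs_eq_clact: "abs_eq clact a (acls v) b (acls w) \<longleftrightarrow>
  (\<exists>c. c \<noteq> a \<and> c \<noteq> b \<and> c \<notin> fnw v \<and> c \<notin> fnw w \<and> alpha (blact (sw a c) v) (blact (sw b c) w))"
  by (simp add: abs_eq_def supp_acls clact_sw acls_eq_iff)

lemma K: "abs_eq clact a (acls v) b (acls w) \<longleftrightarrow> alpha (Bind a # v) (Bind b # w)"
proof
  assume "abs_eq clact a (acls v) b (acls w)"
  then obtain c where c: "c \<noteq> a" "c \<noteq> b" "c \<notin> fnw v" "c \<notin> fnw w"
     "alpha (blact (sw a c) v) (blact (sw b c) w)" by (auto simp: abs_eq_clact)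
  have "alpha (Bind a # v) (Bind c # blact (sw a c) v)" using rename_bind c by blast
  moreover have "alpha (Bind b # w) (Bind c # blact (sw b c) w)" using rename_bind c by blast
  moreover have "alpha (Bind c # blact (sw a c) v) (Bind c # blact (sw b c) w)" using alpha_cons c by blast
  ultimately show "alpha (Bind a # v) (Bind b # w)" using alpha_trans alpha_sym by meson
next
  assume "alpha (Bind a # v) (Bind b # w)"
  then have P: "Pall a v b w" using alpha_Bind by blast
  obtain c where c: "c \<notin> fnw v \<union> fnw w \<union> {a, b}" using fresh_name[of "fnw v \<union> fnw w \<union> {a, b}"] by auto
  then show "abs_eq clact a (acls v) b (acls w)" using P unfolding abs_eq_clact Pall_def
    by (intro exI[of _ c]) auto
qed

lemma clact_inv: "clact (sw b c) (clact (sw b c) y) = y"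
proof -
  have "sw b c \<circ> sw b c = id" by (rule ext) simp
  then show ?thesis unfolding clact_def by (simp add: image_comp)
qed

lemma abs_AC: "abs_eq clact a (acls v) b y \<Longrightarrow> \<exists>u. y = acls u"
proof -
  assume "abs_eq clact a (acls v) b y"
  then obtain c where "clact (sw a c) (acls v) = clact (sw b c) y" by (auto simp: abs_eq_def)
  then have "clact (sw b c) (acls (blact (sw a c) v)) = clact (sw b c) (clact (sw b c) y)"
    using clact_sw by simp
  then have "y = clact (sw b c) (acls (blact (sw a c) v))" using clact_inv by simp
  then show ?thesis using clact_sw by blast
qed

lemma abs_char: "(d, y) \<in> absclass clact a (acls w) \<longleftrightarrow> (\<exists>u. y = acls u \<and> alpha (Bind a # w) (Bind d # u))"
proof
  assume "(d, y) \<in> absclass clact a (acls w)"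
  then have h: "abs_eq clact a (acls w) d y" by (simp add: absclass_def)
  then obtain u where u: "y = acls u" using abs_AC by blast
  then show "\<exists>u. y = acls u \<and> alpha (Bind a # w) (Bind d # u)" using h K by blast
next
  assume "\<exists>u. y = acls u \<and> alpha (Bind a # w) (Bind d # u)"
  then obtain u where "y = acls u" "alpha (Bind a # w) (Bind d # u)" by blast
  then show "(d, y) \<in> absclass clact a (acls w)" using K by (simp add: absclass_def)
qed




fun fo :: "bar list \<Rightarrow> bar list set Fo" where
  "fo [] = FStar"
| "fo (Plain a # v) = FLit a (acls v)"
| "fo (Bind a # v) = FAbs (absclass clact a (acls v))"

lemma fo_FC: "fo w \<in> FC"
  by (cases w rule: fo.cases) (auto simp: FC_def AC_def)

lemma FC_fo: "e \<in> FC \<Longrightarrow> \<exists>w. e = fo w"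
proof -
  assume "e \<in> FC"
  then consider "e = FStar" | a v where "e = FLit a (acls v)" | a v where "e = FAbs (absclass clact a (acls v))"
    unfolding FC_def AC_def by blast
  then show ?thesis
  proof cases
    case 1 then show ?thesis using fo.simps(1) by metis
  next
    case (2 a v) then show ?thesis using fo.simps(2) by metis
  next
    case (3 a v) then show ?thesis using fo.simps(3) by metis
  qed
qed

lemma iota_fo: "iota (fo w) = acls w"
proof (cases w rule: fo.cases)
  case 1 then show ?thesis by simp
next
  case (2 a v)
  have "iota (FLit a (acls v)) = acls (Plain a # v)"
  proof (rule set_eqI)
    fix x
    show "x \<in> iota (FLit a (acls v)) \<longleftrightarrow> x \<in> acls (Plain a # v)"
    proof
      assume "x \<in> iota (FLit a (acls v))"
      then obtain w' where "alpha v w'" "alpha (Plain a # w') x" by auto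
      then show "x \<in> acls (Plain a # v)" using alpha_cons alpha_trans acls_mem by blast
    next
      assume "x \<in> acls (Plain a # v)"
      then have "alpha (Plain a # v) x" by simp
      moreover have "v \<in> acls v" using alpha_refl by simp
      ultimately have "\<exists>w\<in>acls v. alpha (Plain a # w) x" by blast
      then show "x \<in> iota (FLit a (acls v))" by simp
    qed
  qed
  then show ?thesis using 2 by simp
next
  case (3 a v)
  have "iota (FAbs (absclass clact a (acls v))) = acls (Bind a # v)"
  proof (rule set_eqI)
    fix x
    show "x \<in> iota (FAbs (absclass clact a (acls v))) \<longleftrightarrow> x \<in> acls (Bind a # v)"
    proof
      assume "x \<in> iota (FAbs (absclass clact a (acls v)))"
      then have "\<exists>(b, L)\<in>absclass clact a (acls v). \<exists>w\<in>L. alpha (Bind b # w) x" by simp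
      then obtain b L w' where bL: "(b, L) \<in> absclass clact a (acls v)" "w' \<in> L" "alpha (Bind b # w') x"
        by blast
      then obtain u where u: "L = acls u" "alpha (Bind a # v) (Bind b # u)" using abs_char by blast
      then have "alpha (Bind b # u) (Bind b # w')" using bL alpha_cons by simp
      then show "x \<in> acls (Bind a # v)" using u bL alpha_trans acls_mem by blast
    next
      assume "x \<in> acls (Bind a # v)"
      moreover have "(a, acls v) \<in> absclass clact a (acls v)" using abs_char alpha_refl by blast
      moreover have "v \<in> acls v" using alpha_refl by simp
      ultimately have "\<exists>(b, L)\<in>absclass clact a (acls v). \<exists>w\<in>L. alpha (Bind b # w) x" by (intro bexI[of _ "(a, acls v)"]) auto
      then show "x \<in> iota (FAbs (absclass clact a (acls v)))" by simp
    qed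
  qed
  then show ?thesis using 3 by simp
qed

lemma fo_alpha: "alpha u v \<Longrightarrow> fo u = fo v"
proof -
  assume h: "alpha u v"
  then have H: "Hrel u v" using Hrel_alpha by blast
  show ?thesis
  proof (cases u rule: fo.cases)
    case 1
    then have "v = []" using h alpha_Nil by blast
    then show ?thesis using 1 by simp
  next
    case (2 a w)
    then obtain w' where "v = Plain a # w'" "alpha w w'" using alpha_Plain h by blast
    then show ?thesis using 2 acls_eq_iff by simp
  next
    case (3 a w)
    then obtain b w' where bw: "v = Bind b # w'" using alpha_Bind h by blast
    have al: "alpha (Bind a # w) (Bind b # w')" using h 3 bw by simp
    have "absclass clact a (acls w) = absclass clact b (acls w')"
    proof (rule set_eqI)
      fix z :: "name \<times> bar list set"
      obtain d y where z: "z = (d, y)" by fastforce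
      have "(\<exists>u. y = acls u \<and> alpha (Bind a # w) (Bind d # u)) \<longleftrightarrow>
            (\<exists>u. y = acls u \<and> alpha (Bind b # w') (Bind d # u))"
        using al alpha_trans alpha_sym by blast
      then show "z \<in> absclass clact a (acls w) \<longleftrightarrow> z \<in> absclass clact b (acls w')"
        using z abs_char by simp
    qed
    then show ?thesis using 3 bw by simp
  qed
qed

lemma inv_iota: "inv_into FC iota (acls w) = fo w"
proof -
  have inj: "inj_on iota FC"
  proof (rule inj_onI)
    fix x y assume "x \<in> FC" "y \<in> FC" "iota x = iota y"
    then obtain u v where "x = fo u" "y = fo v" "acls u = acls v" using FC_fo iota_fo by metis
    then show "x = y" using fo_alpha acls_eq_iff by blast
  qed
  have "iota (fo w) = acls w" by (rule iota_fo)
  then show ?thesis using inv_into_f_f[OF inj fo_FC[of w]] by simp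
qed

section \<open>automata side\<close>

lemma nom_id: "nominal_set act \<Longrightarrow> act id q = q"
  by (simp add: nominal_set_def)

lemma nom_comp: "nominal_set act \<Longrightarrow> fperm p \<Longrightarrow> fperm p' \<Longrightarrow> act (p \<circ> p') q = act p (act p' q)"
  by (simp add: nominal_set_def)

lemma nom_supp: "nominal_set act \<Longrightarrow> \<exists>A. finite A \<and> supports act A q"
  by (simp add: nominal_set_def)

lemma supp_sub: "finite A \<Longrightarrow> supports act A q \<Longrightarrow> supp act q \<subseteq> A"
  unfolding supp_def by (intro Inter_lower) simp

lemma abs_eq_refl: "nominal_set act \<Longrightarrow> abs_eq act a q a q"
proof -
  assume n: "nominal_set act"
  obtain A where A: "finite A" "supports act A q" using nom_supp[OF n] by blast
  have "finite (A \<union> {a})" using A by simp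
  then obtain c where c: "c \<notin> A \<union> {a}" using fresh_name by blast
  have "supp act q \<subseteq> A" by (rule supp_sub[OF A])
  then have c2: "c \<notin> supp act q" using c by auto
  have c3: "c \<noteq> a" using c by simp
  show ?thesis unfolding abs_eq_def by (rule exI[of _ c]) (simp add: c2 c3)
qed

lemma rnna_nom: "rnna act R Fin \<Longrightarrow> nominal_set act" by (simp add: rnna_def)

lemma accepts_eqvt: assumes r: "rnna act R Fin" and p: "fperm p"
  shows "accepts R Fin q w \<Longrightarrow> accepts R Fin (act p q) (blact p w)"
proof (induction w arbitrary: q)
  case Nil then show ?case using r p by (simp add: rnna_def)
next
  case (Cons s w)
  then obtain q' where "(q, s, q') \<in> R" "accepts R Fin q' w" by auto
  moreover have "(q, s, q') \<in> R \<Longrightarrow> (act p q, bact p s, act p q') \<in> R" using r p by (simp add: rnna_def)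
  ultimately show ?case using Cons.IH by auto
qed

lemma inv_comp_id: "fperm p \<Longrightarrow> inv p \<circ> p = id"
  unfolding fperm_def using bij_is_inj inj_iff by blast

lemma accepts_eqvt_rev: assumes r: "rnna act R Fin" and p: "fperm p"
  and h: "accepts R Fin (act p q) w"
  shows "accepts R Fin q (blact (inv p) w)"
proof -
  have "accepts R Fin (act (inv p) (act p q)) (blact (inv p) w)"
    using accepts_eqvt[OF r fperm_inv[OF p] h] .
  moreover have "act (inv p) (act p q) = q"
    using nom_comp[OF rnna_nom[OF r] fperm_inv[OF p] p] inv_comp_id[OF p] nom_id[OF rnna_nom[OF r]] by metis
  ultimately show ?thesis by simp
qed

lemma pinv_id: "fperm p \<Longrightarrow> p \<circ> inv p = id"
  unfolding fperm_def using bij_is_surj surj_iff by blast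

lemma bar_lang_eqvt: assumes r: "rnna act R Fin" and p: "fperm p"
  shows "bar_lang R Fin (act p q) = clact p ` bar_lang R Fin q"
proof
  have b: "bij p" using p by (simp add: fperm_def)
  show "bar_lang R Fin (act p q) \<subseteq> clact p ` bar_lang R Fin q"
  proof
    fix L assume "L \<in> bar_lang R Fin (act p q)"
    then obtain w where w: "L = acls w" "accepts R Fin (act p q) w" by (auto simp: bar_lang_def)
    then have "accepts R Fin q (blact (inv p) w)" using accepts_eqvt_rev[OF r p] by simp
    then have "acls (blact (inv p) w) \<in> bar_lang R Fin q" unfolding bar_lang_def by blast
    moreover have "clact p (acls (blact (inv p) w)) = acls w"
      using clact_acls[OF b] pinv_id[OF p] by simp
    ultimately show "L \<in> clact p ` bar_lang R Fin q" using w(1) by (metis image_eqI)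
  qed
next
  have b: "bij p" using p by (simp add: fperm_def)
  show "clact p ` bar_lang R Fin q \<subseteq> bar_lang R Fin (act p q)"
  proof
    fix L assume "L \<in> clact p ` bar_lang R Fin q"
    then obtain w where w: "L = clact p (acls w)" "accepts R Fin q w" unfolding bar_lang_def by blast
    then have "accepts R Fin (act p q) (blact p w)" using accepts_eqvt[OF r p] by simp
    moreover have "L = acls (blact p w)" using w(1) clact_acls[OF b] by simp
    ultimately show "L \<in> bar_lang R Fin (act p q)" unfolding bar_lang_def by blast
  qed
qed




lemma obtain_fresh: "finite (X::name set) \<Longrightarrow> (\<And>c. c \<notin> X \<Longrightarrow> P) \<Longrightarrow> P"
  using fresh_name by blast

definition Nn :: "('q \<times> bar \<times> 'q) set \<Rightarrow> 'q set \<Rightarrow> nat \<Rightarrow> 'q \<Rightarrow> name set" where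
  "Nn R Fin n q = \<Union> (fnw ` {w. accepts R Fin q w \<and> length w \<le> n})"

lemma Nn_eqvt: assumes r: "rnna act R Fin" and p: "fperm p"
  shows "Nn R Fin n (act p q) = p ` Nn R Fin n q"
proof
  have ip: "inj p" using p unfolding fperm_def using bij_is_inj by blast
  show "Nn R Fin n (act p q) \<subseteq> p ` Nn R Fin n q"
  proof
    fix x assume "x \<in> Nn R Fin n (act p q)"
    then obtain w where w: "x \<in> fnw w" "accepts R Fin (act p q) w" "length w \<le> n"
      unfolding Nn_def by blast
    define w' where "w' = blact (inv p) w"
    have a: "accepts R Fin q w'" unfolding w'_def using accepts_eqvt_rev[OF r p w(2)] .
    have "blact p w' = w" unfolding w'_def using pinv_id[OF p] by simp
    then have "fnw w = p ` fnw w'" using fnw_blact[OF ip] by metis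
    moreover have "length w' \<le> n" using w(3) unfolding w'_def by simp
    ultimately have "fnw w \<subseteq> p ` Nn R Fin n q" using a unfolding Nn_def by blast
    then show "x \<in> p ` Nn R Fin n q" using w(1) by blast
  qed
next
  have ip: "inj p" using p unfolding fperm_def using bij_is_inj by blast
  show "p ` Nn R Fin n q \<subseteq> Nn R Fin n (act p q)"
  proof
    fix x assume "x \<in> p ` Nn R Fin n q"
    then obtain y w where w: "x = p y" "y \<in> fnw w" "accepts R Fin q w" "length w \<le> n"
      unfolding Nn_def by blast
    have "accepts R Fin (act p q) (blact p w)" using accepts_eqvt[OF r p w(3)] .
    moreover have "x \<in> fnw (blact p w)" using fnw_blact[OF ip] w by simp
    moreover have "length (blact p w) \<le> n" using w by simp
    ultimately show "x \<in> Nn R Fin n (act p q)" unfolding Nn_def by blast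
  qed
qed

lemma lemma_F: assumes X: "finite X" and A: "finite (A::name set)"
  and h: "\<And>a b. a \<notin> A \<Longrightarrow> b \<notin> A \<Longrightarrow> sw a b ` X \<subseteq> X"
  shows "X \<subseteq> A"
proof (rule ccontr)
  assume "\<not> X \<subseteq> A"
  then obtain x where x: "x \<in> X" "x \<notin> A" by blast
  have "- A \<subseteq> X"
  proof
    fix b assume "b \<in> - A"
    then have "sw x b x \<in> sw x b ` X" using x by blast
    then have "b \<in> sw x b ` X" by (simp add: sw_apply)
    then show "b \<in> X" using h[of x b] x \<open>b \<in> - A\<close> by blast
  qed
  then have "finite (- A)" using X finite_subset by blast
  then have "finite (A \<union> - A)" using A by simp
  then show False using infinite_UNIV_nat by simp
qed

lemma Nn_sub: assumes r: "rnna act R Fin" and f: "finite (Nn R Fin n q)"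
  and A: "finite A" "supports act A q"
  shows "Nn R Fin n q \<subseteq> A"
proof (rule lemma_F[OF f A(1)])
  fix a b assume ab: "a \<notin> A" "b \<notin> A"
  have "\<forall>x\<in>A. sw a b x = x" using ab by (auto simp: sw_apply)
  then have "act (sw a b) q = q" using A(2) fperm_sw unfolding supports_def by blast
  then show "sw a b ` Nn R Fin n q \<subseteq> Nn R Fin n q" using Nn_eqvt[OF r fperm_sw, of n a b q] by simp
qed

lemma Nn_supp: assumes r: "rnna act R Fin" and f: "finite (Nn R Fin n q)"
  shows "Nn R Fin n q \<subseteq> supp act q"
  unfolding supp_def using Nn_sub[OF r f] by (intro Inter_greatest) blast

lemma Nn_rep: assumes r: "rnna act R Fin" and f1: "finite (Nn R Fin n q1)"
  and f2: "finite (Nn R Fin n q2)" and ab: "abs_eq act a q1 b q2"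
  shows "Nn R Fin n q1 - {a} = Nn R Fin n q2 - {b}"
proof -
  obtain c where c: "c \<noteq> a" "c \<noteq> b" "c \<notin> supp act q1" "c \<notin> supp act q2"
    "act (sw a c) q1 = act (sw b c) q2" using ab unfolding abs_eq_def by blast
  have "sw a c ` Nn R Fin n q1 = sw b c ` Nn R Fin n q2"
    using Nn_eqvt[OF r fperm_sw] c(5) by metis
  moreover have "c \<notin> Nn R Fin n q1" using Nn_supp[OF r f1] c(3) by blast
  moreover have "c \<notin> Nn R Fin n q2" using Nn_supp[OF r f2] c(4) by blast
  ultimately show ?thesis using img_sw_minus by metis
qed

lemma rnna_bind: "rnna act R Fin \<Longrightarrow> (q, Bind a, q') \<in> R \<Longrightarrow> abs_eq act a q' b q'' \<Longrightarrow> (q, Bind b, q'') \<in> R"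
  unfolding rnna_def by blast

lemma Nn_fin: assumes r: "rnna act R Fin" shows "finite (Nn R Fin n q)"
proof (induction n arbitrary: q)
  case 0
  have "Nn R Fin 0 q \<subseteq> {}" unfolding Nn_def by auto
  then show ?case by (simp add: finite_subset)
next
  case (Suc n)
  define PS where "PS = {(a, q'). (q, Plain a, q') \<in> R}"
  define BS where "BS = {absclass act a q' | a q'. (q, Bind a, q') \<in> R}"
  define g where "g C = (let x = SOME x. x \<in> C \<and> (q, Bind (fst x), snd x) \<in> R in Nn R Fin n (snd x) - {fst x})" for C
  have fPS: "finite PS" using r unfolding rnna_def PS_def by blast
  have fBS: "finite BS" using r unfolding rnna_def BS_def by blast
  have fg: "finite (g C)" for C unfolding g_def Let_def using Suc.IH by simp
  have sub: "Nn R Fin (Suc n) q \<subseteq> \<Union> ((\<lambda>(a, q'). insert a (Nn R Fin n q')) ` PS) \<union> \<Union> (g ` BS)"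
  proof
    fix x assume "x \<in> Nn R Fin (Suc n) q"
    then obtain w where w: "x \<in> fnw w" "accepts R Fin q w" "length w \<le> Suc n"
      unfolding Nn_def by blast
    show "x \<in> \<Union> ((\<lambda>(a, q'). insert a (Nn R Fin n q')) ` PS) \<union> \<Union> (g ` BS)"
    proof (cases w rule: fnw.cases)
      case 1 then show ?thesis using w by simp
    next
      case (2 a v)
      then obtain q' where q': "(q, Plain a, q') \<in> R" "accepts R Fin q' v" using w by auto
      have "fnw v \<subseteq> Nn R Fin n q'" using q' w 2 unfolding Nn_def by auto
      then have "x \<in> insert a (Nn R Fin n q')" using w 2 by auto
      moreover have "(a, q') \<in> PS" using q' unfolding PS_def by simp
      ultimately show ?thesis by blast
    next
      case (3 a v)
      then obtain q' where q': "(q, Bind a, q') \<in> R" "accepts R Fin q' v" using w by auto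
      have "fnw v \<subseteq> Nn R Fin n q'" using q' w 3 unfolding Nn_def by auto
      then have x1: "x \<in> Nn R Fin n q' - {a}" using w 3 by auto
      define C where "C = absclass act a q'"
      have CB: "C \<in> BS" unfolding C_def BS_def using q' by blast
      have "(a, q') \<in> C" unfolding C_def absclass_def using abs_eq_refl[OF rnna_nom[OF r]] by simp
      then have ex: "\<exists>x. x \<in> C \<and> (q, Bind (fst x), snd x) \<in> R" using q' by auto
      define y where "y = (SOME x. x \<in> C \<and> (q, Bind (fst x), snd x) \<in> R)"
      have y: "y \<in> C" "(q, Bind (fst y), snd y) \<in> R" using someI_ex[OF ex] unfolding y_def by auto
      have "abs_eq act a q' (fst y) (snd y)" using y(1) unfolding C_def absclass_def by (cases y) simp
      then have "Nn R Fin n q' - {a} = Nn R Fin n (snd y) - {fst y}"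
        using Nn_rep[OF r Suc.IH Suc.IH] by blast
      also have "\<dots> = g C" unfolding g_def y_def Let_def by simp
      finally have "x \<in> g C" using x1 by simp
      then show ?thesis using CB by blast
    qed
  qed
  have "finite (\<Union> ((\<lambda>(a, q'). insert a (Nn R Fin n q')) ` PS) \<union> \<Union> (g ` BS))"
    using fPS fBS fg Suc.IH by auto
  then show ?case using sub finite_subset by blast
qed

lemma N_bound: assumes r: "rnna act R Fin"
  shows "\<exists>A. finite A \<and> (\<forall>w. accepts R Fin q w \<longrightarrow> fnw w \<subseteq> A)"
proof -
  obtain A where A: "finite A" "supports act A q" using nom_supp[OF rnna_nom[OF r]] by blast
  have "fnw w \<subseteq> A" if "accepts R Fin q w" for w
  proof -
    have "fnw w \<subseteq> Nn R Fin (length w) q" using that unfolding Nn_def by blast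
    also have "\<dots> \<subseteq> A" using Nn_sub[OF r Nn_fin[OF r] A] .
    finally show ?thesis .
  qed
  then show ?thesis using A(1) by blast
qed




lemma coal_iff: "c \<in> coal act R Fin q \<longleftrightarrow> (c = FStar \<and> q \<in> Fin) \<or>
   (\<exists>a q'. c = FLit a q' \<and> (q, Plain a, q') \<in> R) \<or>
   (\<exists>a q'. c = FAbs (absclass act a q') \<and> (q, Bind a, q') \<in> R)"
  unfolding coal_def by blast

lemma Fbar_Star: "FStar \<in> Fbar clact tr c \<longleftrightarrow> c = FStar"
  by (cases c) auto

lemma Fbar_Lit: "FLit a L \<in> Fbar clact tr c \<longleftrightarrow> (\<exists>x. c = FLit a x \<and> L \<in> tr x)"
  by (cases c) auto

lemma Fbar_Abs: "FAbs D \<in> Fbar clact tr c \<longleftrightarrow>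
   (\<exists>C. c = FAbs C \<and> (\<exists>b x y. D = absclass clact b y \<and> (b, x) \<in> C \<and> y \<in> tr x))"
  by (cases c) auto

lemma kc_left: "kcomp (\<lambda>L. {inv_into FC iota L}) tr q = inv_into FC iota ` tr q"
  unfolding kcomp_def by blast

lemma kc_right: "kcomp (Fbar clact tr) (coal act R Fin) q = \<Union> (Fbar clact tr ` coal act R Fin q)"
  unfolding kcomp_def by simp

lemma acls_in_AC: "acls w \<in> AC" unfolding AC_def by simp

lemma AC_acls: "L \<in> AC \<Longrightarrow> \<exists>w. L = acls w" unfolding AC_def by blast

lemma existence: assumes r: "rnna act R Fin"
  shows "trace_morph act R Fin (bar_lang R Fin)"
  unfolding trace_morph_def
proof (intro conjI allI impI)
  fix q
  show "bar_lang R Fin q \<subseteq> AC" unfolding bar_lang_def AC_def by blast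
next
  fix q
  obtain A where A: "finite A" "\<forall>w. accepts R Fin q w \<longrightarrow> fnw w \<subseteq> A" using N_bound[OF r] by blast
  have "(\<Union>L\<in>bar_lang R Fin q. supp clact L) \<subseteq> A"
  proof
    fix x assume "x \<in> (\<Union>L\<in>bar_lang R Fin q. supp clact L)"
    then obtain w where "accepts R Fin q w" "x \<in> supp clact (acls w)" unfolding bar_lang_def by blast
    then show "x \<in> A" using A(2) supp_acls by blast
  qed
  then show "finite (\<Union>L\<in>bar_lang R Fin q. supp clact L)" using A(1) finite_subset by blast
next
  fix p q assume "fperm p"
  then show "bar_lang R Fin (act p q) = clact p ` bar_lang R Fin q" using bar_lang_eqvt[OF r] by blast
next
  show "kcomp (\<lambda>L. {inv_into FC iota L}) (bar_lang R Fin) = kcomp (Fbar clact (bar_lang R Fin)) (coal act R Fin)"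
  proof (rule ext)
    fix q
    have l: "inv_into FC iota ` bar_lang R Fin q = {fo w | w. accepts R Fin q w}"
    proof
      show "inv_into FC iota ` bar_lang R Fin q \<subseteq> {fo w | w. accepts R Fin q w}"
        unfolding bar_lang_def by (auto simp: inv_iota)
    next
      show "{fo w | w. accepts R Fin q w} \<subseteq> inv_into FC iota ` bar_lang R Fin q"
      proof
        fix e assume "e \<in> {fo w | w. accepts R Fin q w}"
        then obtain w where w: "e = fo w" "accepts R Fin q w" by blast
        then have "acls w \<in> bar_lang R Fin q" unfolding bar_lang_def by blast
        moreover have "e = inv_into FC iota (acls w)" using w inv_iota by simp
        ultimately show "e \<in> inv_into FC iota ` bar_lang R Fin q" by blast
      qed
    qed
    have "{fo w | w. accepts R Fin q w} = \<Union> (Fbar clact (bar_lang R Fin) ` coal act R Fin q)"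
    proof
      show "{fo w | w. accepts R Fin q w} \<subseteq> \<Union> (Fbar clact (bar_lang R Fin) ` coal act R Fin q)"
      proof
        fix e assume "e \<in> {fo w | w. accepts R Fin q w}"
        then obtain w where w: "e = fo w" "accepts R Fin q w" by blast
        show "e \<in> \<Union> (Fbar clact (bar_lang R Fin) ` coal act R Fin q)"
        proof (cases w rule: fo.cases)
          case 1
          then have c1: "FStar \<in> coal act R Fin q" using w by (simp add: coal_iff)
          have c2: "e \<in> Fbar clact (bar_lang R Fin) FStar" using w 1 by simp
          show ?thesis by (rule UN_I[where B="Fbar clact (bar_lang R Fin)", OF c1 c2])
        next
          case (2 a v)
          then obtain q' where q': "(q, Plain a, q') \<in> R" "accepts R Fin q' v" using w by auto
          have c1: "FLit a q' \<in> coal act R Fin q" using q' by (simp add: coal_iff)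
          have "acls v \<in> bar_lang R Fin q'" using q' unfolding bar_lang_def by blast
          then have c2: "e \<in> Fbar clact (bar_lang R Fin) (FLit a q')" using w 2 by simp
          show ?thesis by (rule UN_I[where B="Fbar clact (bar_lang R Fin)", OF c1 c2])
        next
          case (3 a v)
          then obtain q' where q': "(q, Bind a, q') \<in> R" "accepts R Fin q' v" using w by auto
          have c1: "FAbs (absclass act a q') \<in> coal act R Fin q" using q' by (simp add: coal_iff) blast
          have m1: "acls v \<in> bar_lang R Fin q'" using q' unfolding bar_lang_def by blast
          have m2: "(a, q') \<in> absclass act a q'" unfolding absclass_def
            using abs_eq_refl[OF rnna_nom[OF r]] by simp
          have "e = FAbs (absclass clact a (acls v))" using w 3 by simp
          then have c2: "e \<in> Fbar clact (bar_lang R Fin) (FAbs (absclass act a q'))"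
            using m1 m2 by auto
          show ?thesis by (rule UN_I[where B="Fbar clact (bar_lang R Fin)", OF c1 c2])
        qed
      qed
    next
      show "\<Union> (Fbar clact (bar_lang R Fin) ` coal act R Fin q) \<subseteq> {fo w | w. accepts R Fin q w}"
      proof
        fix e assume "e \<in> \<Union> (Fbar clact (bar_lang R Fin) ` coal act R Fin q)"
        then obtain c where c: "c \<in> coal act R Fin q" "e \<in> Fbar clact (bar_lang R Fin) c" by blast
        have "(c = FStar \<and> q \<in> Fin) \<or>
           (\<exists>a q'. c = FLit a q' \<and> (q, Plain a, q') \<in> R) \<or>
           (\<exists>a q'. c = FAbs (absclass act a q') \<and> (q, Bind a, q') \<in> R)" using c(1) by (simp only: coal_iff)
        then consider "c = FStar" "q \<in> Fin" | a q' where "c = FLit a q'" "(q, Plain a, q') \<in> R"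
          | a q' where "c = FAbs (absclass act a q')" "(q, Bind a, q') \<in> R"
          by blast
        then show "e \<in> {fo w | w. accepts R Fin q w}"
        proof cases
          case 1
          then have "e = fo []" "accepts R Fin q []" using c by auto
          then show ?thesis by blast
        next
          case (2 a q')
          then obtain L where L: "e = FLit a L" "L \<in> bar_lang R Fin q'" using c by auto
          then obtain v where v: "L = acls v" "accepts R Fin q' v" unfolding bar_lang_def by blast
          then have "e = fo (Plain a # v)" "accepts R Fin q (Plain a # v)" using L 2 by auto
          then show ?thesis by blast
        next
          case (3 a q')
          then obtain b x y where bxy: "e = FAbs (absclass clact b y)" "(b, x) \<in> absclass act a q'"
            "y \<in> bar_lang R Fin x" using c by auto
          then obtain v where v: "y = acls v" "accepts R Fin x v" unfolding bar_lang_def by blast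
          have "abs_eq act a q' b x" using bxy(2) unfolding absclass_def by simp
          then have "(q, Bind b, x) \<in> R" using rnna_bind[OF r] 3 by blast
          then have "e = fo (Bind b # v)" "accepts R Fin q (Bind b # v)" using bxy v by auto
          then show ?thesis by blast
        qed
      qed
    qed
    then show "kcomp (\<lambda>L. {inv_into FC iota L}) (bar_lang R Fin) q = kcomp (Fbar clact (bar_lang R Fin)) (coal act R Fin) q"
      using l kc_left kc_right by metis
  qed
qed




lemma uniqueness: assumes r: "rnna act R Fin" and t: "trace_morph act R Fin tr"
  shows "tr q = bar_lang R Fin q"
proof -
  have AC: "\<And>q. tr q \<subseteq> AC" using t unfolding trace_morph_def by blast
  have keq: "kcomp (\<lambda>L. {inv_into FC iota L}) tr = kcomp (Fbar clact tr) (coal act R Fin)"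
    using t unfolding trace_morph_def by blast
  have E: "\<And>q. inv_into FC iota ` tr q = \<Union> (Fbar clact tr ` coal act R Fin q)"
  proof -
    fix q
    have "kcomp (\<lambda>L. {inv_into FC iota L}) tr q = kcomp (Fbar clact tr) (coal act R Fin) q"
      using keq by simp
    then show "inv_into FC iota ` tr q = \<Union> (Fbar clact tr ` coal act R Fin q)"
      using kc_left kc_right by metis
  qed
  have A: "\<And>q u. acls u \<in> tr q \<Longrightarrow> \<exists>c. c \<in> coal act R Fin q \<and> fo u \<in> Fbar clact tr c"
  proof -
    fix q u assume "acls u \<in> tr q"
    then have "inv_into FC iota (acls u) \<in> inv_into FC iota ` tr q" by (rule imageI)
    then have "fo u \<in> \<Union> (Fbar clact tr ` coal act R Fin q)" using E inv_iota by metis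
    then show "\<exists>c. c \<in> coal act R Fin q \<and> fo u \<in> Fbar clact tr c" by blast
  qed
  have C: "\<And>q w c. c \<in> coal act R Fin q \<Longrightarrow> fo w \<in> Fbar clact tr c \<Longrightarrow> acls w \<in> tr q"
  proof -
    fix q w c assume "c \<in> coal act R Fin q" "fo w \<in> Fbar clact tr c"
    then have "fo w \<in> \<Union> (Fbar clact tr ` coal act R Fin q)" by blast
    then have "fo w \<in> inv_into FC iota ` tr q" using E by metis
    then obtain L where L: "L \<in> tr q" "fo w = inv_into FC iota L" by blast
    then obtain u where u: "L = acls u" using AC AC_acls by blast
    then have "fo w = fo u" using L inv_iota by simp
    then have "acls w = acls u" using iota_fo by metis
    then show "acls w \<in> tr q" using L u by simp
  qed
  have dir1: "\<forall>u q. length u = n \<longrightarrow> acls u \<in> tr q \<longrightarrow> (\<exists>w. accepts R Fin q w \<and> alpha u w)" for n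
  proof (induction n rule: less_induct)
    case (less n)
    show ?case
    proof (intro allI impI)
    fix u q assume ln: "length u = n" and uq: "acls u \<in> tr q"
    obtain c where c: "c \<in> coal act R Fin q" "fo u \<in> Fbar clact tr c" using A[OF uq] by blast
    have cc: "(c = FStar \<and> q \<in> Fin) \<or>
           (\<exists>a q'. c = FLit a q' \<and> (q, Plain a, q') \<in> R) \<or>
           (\<exists>a q'. c = FAbs (absclass act a q') \<and> (q, Bind a, q') \<in> R)" using c(1) by (simp only: coal_iff)
    show "\<exists>w. accepts R Fin q w \<and> alpha u w"
    proof (cases u rule: fo.cases)
      case 1
      then have "FStar \<in> Fbar clact tr c" using c(2) by simp
      then have "c = FStar" by (simp only: Fbar_Star)
      then have "q \<in> Fin" using cc by simp
      then show ?thesis using 1 alpha_refl by (intro exI[of _ "[]"]) simp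
    next
      case (2 a v)
      then obtain x where x: "c = FLit a x" "acls v \<in> tr x" using c(2) Fbar_Lit by (metis fo.simps(2))
      then have tr: "(q, Plain a, x) \<in> R" using cc by simp
      have "length v < n" using 2 ln by simp
      then obtain w' where w': "accepts R Fin x w'" "alpha v w'" using less.IH x(2) by blast
      show ?thesis using tr w' 2 alpha_cons by (intro exI[of _ "Plain a # w'"]) auto
    next
      case (3 a v)
      then have "FAbs (absclass clact a (acls v)) \<in> Fbar clact tr c" using c(2) by simp
      then have "\<exists>C. c = FAbs C \<and> (\<exists>b x y. absclass clact a (acls v) = absclass clact b y \<and> (b, x) \<in> C \<and> y \<in> tr x)"
        by (simp only: Fbar_Abs)
      then obtain C b x y where Cb: "c = FAbs C" "absclass clact a (acls v) = absclass clact b y"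
        "(b, x) \<in> C" "y \<in> tr x" by blast
      obtain a' q' where aq: "C = absclass act a' q'" "(q, Bind a', q') \<in> R" using cc Cb(1) by auto
      obtain v' where v': "y = acls v'" using AC AC_acls Cb(4) by blast
      have "(b, acls v') \<in> absclass clact b (acls v')" using abs_char alpha_refl by blast
      then have "(b, acls v') \<in> absclass clact a (acls v)" using Cb(2) v' by simp
      then obtain u' where u': "acls v' = acls u'" "alpha (Bind a # v) (Bind b # u')"
        using abs_char by blast
      have avu: "alpha v' u'" using u'(1) acls_eq_iff by blast
      have "length u' = length v" using alpha_length[OF u'(2)] by simp
      then have "length v' < n" using alpha_length[OF avu] 3 ln by simp
      then obtain w' where w': "accepts R Fin x w'" "alpha v' w'" using less.IH Cb(4) v' by blast
      have "abs_eq act a' q' b x" using Cb(3) aq(1) unfolding absclass_def by simp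
      then have tr: "(q, Bind b, x) \<in> R" using rnna_bind[OF r aq(2)] by blast
      have "alpha (Bind b # u') (Bind b # w')" using avu w'(2) alpha_sym alpha_trans alpha_cons by blast
      then have "alpha u (Bind b # w')" using u'(2) 3 alpha_trans by blast
      then show ?thesis using tr w' by (intro exI[of _ "Bind b # w'"]) auto
    qed
    qed
  qed
  have dir2: "\<And>q. accepts R Fin q w \<Longrightarrow> acls w \<in> tr q" for w
  proof (induction w)
    case Nil
    fix q assume "accepts R Fin q []"
    then have c1: "FStar \<in> coal act R Fin q" by (simp add: coal_iff)
    have "fo [] \<in> Fbar clact tr FStar" by simp
    then show "acls [] \<in> tr q" using C[OF c1] by blast
  next
    case (Cons s v)
    fix q assume "accepts R Fin q (s # v)"
    then obtain q' where q': "(q, s, q') \<in> R" "accepts R Fin q' v" by auto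
    have IH: "acls v \<in> tr q'" using Cons.IH q'(2) by blast
    show "acls (s # v) \<in> tr q"
    proof (cases s)
      case (Plain a)
      have c1: "FLit a q' \<in> coal act R Fin q" using q' Plain by (simp add: coal_iff)
      have "fo (s # v) \<in> Fbar clact tr (FLit a q')" using IH Plain by simp
      then show ?thesis using C[OF c1] by blast
    next
      case (Bind a)
      have c1: "FAbs (absclass act a q') \<in> coal act R Fin q" using q' Bind by (simp add: coal_iff) blast
      have m2: "(a, q') \<in> absclass act a q'" unfolding absclass_def
        using abs_eq_refl[OF rnna_nom[OF r]] by simp
      have "fo (s # v) \<in> Fbar clact tr (FAbs (absclass act a q'))" using IH Bind m2 by auto
      then show ?thesis using C[OF c1] by blast
    qed
  qed
  show ?thesis
  proof
    show "tr q \<subseteq> bar_lang R Fin q"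
    proof
      fix L assume L: "L \<in> tr q"
      then obtain u where u: "L = acls u" using AC AC_acls by blast
      then obtain w where "accepts R Fin q w" "alpha u w" using dir1 L by blast
      then show "L \<in> bar_lang R Fin q" using u acls_eq_iff unfolding bar_lang_def by blast
    qed
  next
    show "bar_lang R Fin q \<subseteq> tr q" using dir2 unfolding bar_lang_def by blast
  qed
qed

theorem theorem3p21:
  fixes act :: "(name \<Rightarrow> name) \<Rightarrow> 'q \<Rightarrow> 'q"
    and R :: "('q \<times> bar \<times> 'q) set"
    and Fin :: "'q set"
  assumes "rnna act R Fin"
  shows "trace_morph act R Fin (bar_lang R Fin)
         \<and> (\<forall>tr. trace_morph act R Fin tr \<longrightarrow> (\<forall>q. tr q = bar_lang R Fin q))"
  using existence[OF assms] uniqueness[OF assms] by blast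


end
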